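(* Let $\omega:\Gamma^2\to\Gamma$ be a group morphism and define $\widetilde\omega:\Gamma^2\to\Gamma$ by $\widetilde\omega(g,h):=\omega(h,g)$. Then $G(\widetilde\omega)\cong G(\omega)$.
   Context: $\{0,1\}^*$ denotes the finite words over $\{0,1\}$; $\mathfrak C=\{0,1\}^{\mathbb N}$. A finite complete prefix code is a finite set $\{t_1,\dots,t_n\}\subset\{0,1\}^*$ such that every $x\in\mathfrak C$ has exactly one $t_i$ as prefix. Thompson's group $V$ is the group of homeomorphisms $v$ of $\mathfrak C$ for which there exist finite complete prefix codes $\{t_i\},\{s_i\}$ and a permutation $\sigma$ with $v(t_iw)=s_{\sigma(i)}w$. For a group morphism $\omega:\Gamma^2\to\Gamma$, $K(\omega)$ is the group of maps $a:\{0,1\}^*\to\Gamma$ (pointwise product) with $a(u)=\omega(a(u0),a(u1))$ for all $u$; $V$ acts on it by $\pi(v)(a)(s_{\sigma(i)}u)=a(t_iu)$ for all $i$, $u$ (determining $\pi(v)(a)\in K(\omega)$ uniquely); $G(\omega):=K(\omega)\rtimes V$ with $vav^{-1}=\pi(v)(a)$. *)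

theory Defs
  imports "HOL-Algebra.Algebra"
begin

text \<open>Finite words over {0,1} are \<open>bool list\<close> (False = 0, True = 1);
  the Cantor space is \<open>nat \<Rightarrow> bool\<close>.\<close>

type_synonym word01 = "bool list"
type_synonym cantor = "nat \<Rightarrow> bool"

definition prepend :: "word01 \<Rightarrow> cantor \<Rightarrow> cantor" where
  "prepend u x = (\<lambda>n. if n < length u then u ! n else x (n - length u))"

definition is_prefix_of :: "word01 \<Rightarrow> cantor \<Rightarrow> bool" where
  "is_prefix_of t x \<longleftrightarrow> (\<forall>i < length t. x i = t ! i)"

definition complete_prefix_code :: "nat \<Rightarrow> (nat \<Rightarrow> word01) \<Rightarrow> bool" where
  "complete_prefix_code n t \<longleftrightarrow>
     inj_on t {..<n} \<and> (\<forall>x. \<exists>!i. i < n \<and> is_prefix_of (t i) x)"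

definition V_rep :: "(cantor \<Rightarrow> cantor) \<Rightarrow> nat \<Rightarrow> (nat \<Rightarrow> word01)
     \<Rightarrow> (nat \<Rightarrow> word01) \<Rightarrow> (nat \<Rightarrow> nat) \<Rightarrow> bool" where
  "V_rep v n t s \<sigma> \<longleftrightarrow>
     complete_prefix_code n t \<and> complete_prefix_code n s \<and> \<sigma> permutes {..<n} \<and>
     (\<forall>i < n. \<forall>w. v (prepend (t i) w) = prepend (s (\<sigma> i)) w)"

text \<open>Thompson's group V (as a set of self-maps of the Cantor space; such maps are
  automatically homeomorphisms).\<close>
definition thompsonV :: "(cantor \<Rightarrow> cantor) set" where
  "thompsonV = {v. \<exists>n t s \<sigma>. V_rep v n t s \<sigma>}"

definition Kom :: "('g, 'm) monoid_scheme \<Rightarrow> ('g \<times> 'g \<Rightarrow> 'g) \<Rightarrow> (word01 \<Rightarrow> 'g) set" where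
  "Kom \<Gamma> \<omega> = {a. (\<forall>u. a u \<in> carrier \<Gamma>) \<and> (\<forall>u. a u = \<omega> (a (u @ [False]), a (u @ [True])))}"

definition pi_act :: "('g, 'm) monoid_scheme \<Rightarrow> ('g \<times> 'g \<Rightarrow> 'g) \<Rightarrow> (cantor \<Rightarrow> cantor)
     \<Rightarrow> (word01 \<Rightarrow> 'g) \<Rightarrow> (word01 \<Rightarrow> 'g)" where
  "pi_act \<Gamma> \<omega> v a = (THE b. b \<in> Kom \<Gamma> \<omega> \<and>
      (\<exists>n t s \<sigma>. V_rep v n t s \<sigma> \<and> (\<forall>i < n. \<forall>u. b (s (\<sigma> i) @ u) = a (t i @ u))))"

text \<open>G(\<omega>) = K(\<omega>) \<rtimes> V, elements written as pairs (a, v) standing for a v,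
  with v a v^-1 = \<pi>(v)(a), so (a,v)(b,w) = (a \<pi>(v)(b), v \<circ> w).\<close>
definition Gom :: "('g, 'm) monoid_scheme \<Rightarrow> ('g \<times> 'g \<Rightarrow> 'g)
     \<Rightarrow> ((word01 \<Rightarrow> 'g) \<times> (cantor \<Rightarrow> cantor)) monoid" where
  "Gom \<Gamma> \<omega> = \<lparr>carrier = Kom \<Gamma> \<omega> \<times> thompsonV,
     monoid.mult = (\<lambda>(a, v) (b, w). (\<lambda>u. a u \<otimes>\<^bsub>\<Gamma>\<^esub> pi_act \<Gamma> \<omega> v b u, v \<circ> w)),
     monoid.one = (\<lambda>u. \<one>\<^bsub>\<Gamma>\<^esub>, id)\<rparr>"

end

theory Submission
  imports Defs
begin

definition flipw :: "word01 \<Rightarrow> word01" where "flipw = map Not"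
definition flipc :: "cantor \<Rightarrow> cantor" where "flipc x = (\<lambda>n. \<not> x n)"

definition Pp :: "('g, 'm) monoid_scheme \<Rightarrow> ('g \<times> 'g \<Rightarrow> 'g) \<Rightarrow> (cantor \<Rightarrow> cantor)
     \<Rightarrow> (word01 \<Rightarrow> 'g) \<Rightarrow> (word01 \<Rightarrow> 'g) \<Rightarrow> bool" where
  "Pp \<Gamma> \<omega> v a b \<longleftrightarrow> b \<in> Kom \<Gamma> \<omega> \<and>
      (\<exists>n t s \<sigma>. V_rep v n t s \<sigma> \<and> (\<forall>i < n. \<forall>u. b (s (\<sigma> i) @ u) = a (t i @ u)))"

lemma pi_act_Pp: "pi_act \<Gamma> \<omega> v a = (THE b. Pp \<Gamma> \<omega> v a b)"
  unfolding pi_act_def Pp_def by simp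

lemma flipw_flipw[simp]: "flipw (flipw u) = u"
  by (simp add: flipw_def comp_def)
lemma flipc_flipc[simp]: "flipc (flipc x) = x"
  by (simp add: flipc_def)
lemma flipc_comp: "flipc \<circ> flipc = id"
  by (auto simp: flipc_def)
lemma flipw_append[simp]: "flipw (u @ w) = flipw u @ flipw w"
  by (simp add: flipw_def)
lemma flipw_single[simp]: "flipw [b] = [\<not> b]"
  by (simp add: flipw_def)
lemma length_flipw[simp]: "length (flipw u) = length u"
  by (simp add: flipw_def)
lemma inj_flipw: "inj flipw"
  by (metis flipw_flipw injI)

lemma prepend_flip: "prepend (flipw u) w = flipc (prepend u (flipc w))"
  by (auto simp: prepend_def flipc_def flipw_def)
lemma flipc_prepend: "flipc (prepend (flipw u) w) = prepend u (flipc w)"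
  by (metis flipc_flipc prepend_flip)
lemma prefix_flip: "is_prefix_of (flipw p) x \<longleftrightarrow> is_prefix_of p (flipc x)"
  by (auto simp: is_prefix_of_def flipc_def flipw_def)

lemma prepend_append: "prepend (p @ q) x = prepend p (prepend q x)"
  by (auto simp: prepend_def nth_append)
lemma prefix_prepend: "is_prefix_of p (prepend (p @ d) x)"
  by (auto simp: is_prefix_of_def prepend_def nth_append)
lemma prefix_decomp: "is_prefix_of p x \<Longrightarrow> x = prepend p (\<lambda>k. x (k + length p))"
  by (auto simp: is_prefix_of_def prepend_def)
lemma prepend_inj: "prepend p x = prepend p y \<Longrightarrow> x = y"
proof
  fix k assume "prepend p x = prepend p y"
  hence "prepend p x (k + length p) = prepend p y (k + length p)" by simp
  thus "x k = y k" by (simp add: prepend_def)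
qed
lemma prefix_of_prepend_long:
  assumes "length p \<le> length w" "is_prefix_of p (prepend w x)"
  shows "w = p @ drop (length p) w"
proof -
  have "take (length p) w = p"
  proof (rule nth_equalityI)
    show "length (take (length p) w) = length p" using assms(1) by simp
    fix i assume "i < length (take (length p) w)"
    hence i: "i < length p" "i < length w" using assms(1) by auto
    have "prepend w x i = p ! i" using assms(2) i(1) by (simp add: is_prefix_of_def)
    thus "take (length p) w ! i = p ! i" using i by (simp add: prepend_def)
  qed
  thus ?thesis by (metis append_take_drop_id)
qed

lemma list_eq_prepend:
  assumes "\<And>x. prepend p x = prepend q x"
  shows "p = q"
proof -
  have A: False if "length p < length q" "\<And>x. prepend p x = prepend q x" for p q :: word01
  proof -
    let ?x = "\<lambda>_::nat. \<not> q ! length p"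
    have "prepend p ?x (length p) = prepend q ?x (length p)" using that by simp
    thus False using that(1) by (simp add: prepend_def)
  qed
  have "length p = length q" using A[of p q] A[of q p] assms by (metis linorder_neqE_nat)
  moreover have "p ! k = q ! k" if "k < length p" for k
  proof -
    have "prepend p (\<lambda>_. False) k = prepend q (\<lambda>_. False) k" using assms by simp
    thus ?thesis using that \<open>length p = length q\<close> by (simp add: prepend_def)
  qed
  ultimately show ?thesis by (simp add: nth_equalityI)
qed

lemma Kom_rec: "c \<in> Kom \<Gamma> \<omega> \<Longrightarrow> c u = \<omega> (c (u @ [False]), c (u @ [True]))"
  unfolding Kom_def by blast

lemma Kom_determined:
  assumes "c \<in> Kom \<Gamma> \<omega>" "c' \<in> Kom \<Gamma> \<omega>" "\<And>w. N \<le> length w \<Longrightarrow> c w = c' w"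
  shows "c = c'"
proof -
  have "\<forall>u. N - length u \<le> k \<longrightarrow> c u = c' u" for k
  proof (induction k)
    case 0 thus ?case using assms(3) by simp
  next
    case (Suc k)
    show ?case
    proof (intro allI impI)
      fix u :: word01 assume h: "N - length u \<le> Suc k"
      show "c u = c' u"
      proof (cases "N - length u \<le> k")
        case True thus ?thesis using Suc by simp
      next
        case False
        hence "N - length (u @ [b]) \<le> k" for b using h by simp
        thus ?thesis using Suc Kom_rec[OF assms(1), of u] Kom_rec[OF assms(2), of u] by simp
      qed
    qed
  qed
  thus ?thesis by (metis diff_le_self ext)
qed


lemma code_unique:
  "complete_prefix_code n s \<Longrightarrow> i < n \<Longrightarrow> j < n \<Longrightarrow> is_prefix_of (s i) x
    \<Longrightarrow> is_prefix_of (s j) x \<Longrightarrow> i = j"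
  unfolding complete_prefix_code_def by blast

lemma code_exists:
  "complete_prefix_code n s \<Longrightarrow> \<exists>i<n. is_prefix_of (s i) x"
  unfolding complete_prefix_code_def by blast

lemma perm_lt: "\<sigma> permutes {..<n} \<Longrightarrow> i < n \<Longrightarrow> \<sigma> i < n"
  using permutes_in_image[of \<sigma> "{..<n}" i] by simp

lemma perm_surj: "\<sigma> permutes {..<n} \<Longrightarrow> k < n \<Longrightarrow> \<exists>i<n. \<sigma> i = k"
  using permutes_image[of \<sigma> "{..<n}"] by (metis imageE lessThan_iff)

lemma perm_eq: "\<sigma> permutes {..<n} \<Longrightarrow> \<sigma> i = \<sigma> j \<Longrightarrow> i = j"
  using permutes_inj[of \<sigma> "{..<n}"] by (simp add: inj_eq)

lemma V_inj:
  assumes "V_rep v n t s \<sigma>"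
  shows "inj v"
proof (rule injI)
  fix y z assume e: "v y = v z"
  have ct: "complete_prefix_code n t" and cs: "complete_prefix_code n s"
    and p: "\<sigma> permutes {..<n}"
    and act: "\<And>i w. i < n \<Longrightarrow> v (prepend (t i) w) = prepend (s (\<sigma> i)) w"
    using assms unfolding V_rep_def by auto
  obtain i where i: "i < n" "is_prefix_of (t i) y" using code_exists[OF ct] by blast
  obtain j where j: "j < n" "is_prefix_of (t j) z" using code_exists[OF ct] by blast
  define y' where "y' = (\<lambda>k. y (k + length (t i)))"
  define z' where "z' = (\<lambda>k. z (k + length (t j)))"
  have y: "y = prepend (t i) y'" using prefix_decomp[OF i(2)] y'_def by simp
  have z: "z = prepend (t j) z'" using prefix_decomp[OF j(2)] z'_def by simp
  have vy: "v y = prepend (s (\<sigma> i)) y'" using y act i(1) by simp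
  have vz: "v y = prepend (s (\<sigma> j)) z'" using z act j(1) e by simp
  have pi: "is_prefix_of (s (\<sigma> i)) (v y)" using vy prefix_prepend[of "s (\<sigma> i)" "[]"] by simp
  have pj: "is_prefix_of (s (\<sigma> j)) (v y)" using vz prefix_prepend[of "s (\<sigma> j)" "[]"] by simp
  have "\<sigma> i = \<sigma> j"
    using code_unique[OF cs perm_lt[OF p i(1)] perm_lt[OF p j(1)] pi pj] .
  hence ij: "i = j" using perm_eq[OF p] by blast
  hence "y' = z'" using vy vz prepend_inj by metis
  thus "y = z" using y z ij by simp
qed

lemma long_prefix:
  assumes "complete_prefix_code n s" "\<sigma> permutes {..<n}"
    and "(\<Sum>k<n. length (s k)) \<le> length w"
  shows "\<exists>i<n. \<exists>d. w = s (\<sigma> i) @ d"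
proof -
  obtain k where k: "k < n" "is_prefix_of (s k) (prepend w (\<lambda>_. False))"
    using code_exists[OF assms(1)] by blast
  obtain i where i: "i < n" "\<sigma> i = k" using perm_surj[OF assms(2) k(1)] by blast
  have "length (s k) \<le> (\<Sum>k<n. length (s k))"
    using k(1) by (intro member_le_sum) auto
  hence "w = s k @ drop (length (s k)) w"
    using prefix_of_prepend_long k(2) assms(3) by simp
  thus ?thesis using i by metis
qed

lemma unique_idx:
  assumes "complete_prefix_code n s" "\<sigma> permutes {..<n}" "i < n" "j < n"
    "w = s (\<sigma> i) @ d" "w = s (\<sigma> j) @ d'"
  shows "i = j \<and> d = d'"
proof -
  have "\<sigma> i = \<sigma> j"
    using code_unique[OF assms(1) perm_lt[OF assms(2) assms(3)] perm_lt[OF assms(2) assms(4)],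
        of "prepend w (\<lambda>_. False)"] prefix_prepend assms(5,6) by metis
  thus ?thesis using perm_eq[OF assms(2)] assms(5,6) by auto
qed

lemma Pp_unique:
  assumes "Pp \<Gamma> \<omega> v a c" "Pp \<Gamma> \<omega> v a c'"
  shows "c = c'"
proof -
  obtain n t s \<sigma> where r: "V_rep v n t s \<sigma>" and cK: "c \<in> Kom \<Gamma> \<omega>"
    and h: "\<forall>i<n. \<forall>u. c (s (\<sigma> i) @ u) = a (t i @ u)"
    using assms(1) unfolding Pp_def by blast
  obtain n' t' s' \<sigma>' where r': "V_rep v n' t' s' \<sigma>'" and cK': "c' \<in> Kom \<Gamma> \<omega>"
    and h': "\<forall>i<n'. \<forall>u. c' (s' (\<sigma>' i) @ u) = a (t' i @ u)"
    using assms(2) unfolding Pp_def by blast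
  have cs: "complete_prefix_code n s" "\<sigma> permutes {..<n}"
    and act: "\<And>i w. i < n \<Longrightarrow> v (prepend (t i) w) = prepend (s (\<sigma> i)) w"
    using r unfolding V_rep_def by auto
  have cs': "complete_prefix_code n' s'" "\<sigma>' permutes {..<n'}"
    and act': "\<And>i w. i < n' \<Longrightarrow> v (prepend (t' i) w) = prepend (s' (\<sigma>' i)) w"
    using r' unfolding V_rep_def by auto
  show ?thesis
  proof (rule Kom_determined[OF cK cK'])
    fix w :: word01
    assume "(\<Sum>k<n. length (s k)) + (\<Sum>k<n'. length (s' k)) \<le> length w"
    hence l1: "(\<Sum>k<n. length (s k)) \<le> length w" and l2: "(\<Sum>k<n'. length (s' k)) \<le> length w"
      by auto
    obtain i d where i: "i < n" "w = s (\<sigma> i) @ d" using long_prefix[OF cs l1] by blast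
    obtain j d' where j: "j < n'" "w = s' (\<sigma>' j) @ d'" using long_prefix[OF cs' l2] by blast
    have "v (prepend (t i @ d) x) = v (prepend (t' j @ d') x)" for x
    proof -
      have "v (prepend (t i @ d) x) = prepend (s (\<sigma> i)) (prepend d x)"
        using act[OF i(1)] by (simp add: prepend_append)
      also have "\<dots> = prepend w x" using i(2) by (simp add: prepend_append)
      also have "\<dots> = prepend (s' (\<sigma>' j)) (prepend d' x)" using j(2) by (simp add: prepend_append)
      also have "\<dots> = v (prepend (t' j @ d') x)"
        using act'[OF j(1)] by (simp add: prepend_append)
      finally show ?thesis .
    qed
    hence "prepend (t i @ d) x = prepend (t' j @ d') x" for x
      using V_inj[OF r] by (simp add: inj_eq)
    hence "t i @ d = t' j @ d'" by (rule list_eq_prepend)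
    thus "c w = c' w" using h i h' j by metis
  qed
qed

primrec fill :: "('g \<times> 'g \<Rightarrow> 'g) \<Rightarrow> (word01 \<Rightarrow> 'g) \<Rightarrow> nat \<Rightarrow> word01 \<Rightarrow> 'g" where
  "fill \<omega> b 0 w = b w"
| "fill \<omega> b (Suc k) w = \<omega> (fill \<omega> b k (w @ [False]), fill \<omega> b k (w @ [True]))"

lemma Pp_exists:
  assumes cl: "\<And>x y. x \<in> carrier \<Gamma> \<Longrightarrow> y \<in> carrier \<Gamma> \<Longrightarrow> \<omega> (x, y) \<in> carrier \<Gamma>"
    and r: "V_rep v n t s \<sigma>" and aK: "a \<in> Kom \<Gamma> \<omega>"
  shows "\<exists>c. Pp \<Gamma> \<omega> v a c"
proof -
  have cs: "complete_prefix_code n s" and p: "\<sigma> permutes {..<n}"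
    using r unfolding V_rep_def by auto
  define N where "N = (\<Sum>k<n. length (s k))"
  define idx where "idx w = (THE i. i < n \<and> (\<exists>d. w = s (\<sigma> i) @ d))" for w
  define base where "base w = a (t (idx w) @ drop (length (s (\<sigma> (idx w)))) w)" for w
  define c where "c w = fill \<omega> base (N - length w) w" for w
  have aC: "a u \<in> carrier \<Gamma>" for u using aK unfolding Kom_def by blast
  have base_eq: "base w = a (t i @ d)" if "i < n" "w = s (\<sigma> i) @ d" for w i d
  proof -
    have "idx w = i" unfolding idx_def
    proof (rule the_equality)
      show "i < n \<and> (\<exists>d. w = s (\<sigma> i) @ d)" using that by blast
    next
      fix j assume "j < n \<and> (\<exists>d. w = s (\<sigma> j) @ d)"
      thus "j = i" using unique_idx[OF cs p] that by metis
    qed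
    thus ?thesis unfolding base_def using that by simp
  qed
  have long: "\<exists>i<n. \<exists>d. w = s (\<sigma> i) @ d" if "N \<le> length w" for w
    using long_prefix[OF cs p] that N_def by simp
  have baseC: "base w \<in> carrier \<Gamma>" for w unfolding base_def using aC by simp
  have fillC: "fill \<omega> base k w \<in> carrier \<Gamma>" for k w
    by (induction k arbitrary: w) (auto simp: baseC cl)
  have crec: "c u = \<omega> (c (u @ [False]), c (u @ [True]))" for u
  proof (cases "N \<le> length u")
    case True
    then obtain i d where i: "i < n" "u = s (\<sigma> i) @ d" using long by blast
    have e: "u @ [b] = s (\<sigma> i) @ (d @ [b])" for b using i(2) by simp
    have c1: "c (u @ [b]) = a (t i @ d @ [b])" for b
      using True base_eq[OF i(1) e] unfolding c_def by simp
    have c0: "c u = a (t i @ d)" using True base_eq[OF i] unfolding c_def by simp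
    show ?thesis using Kom_rec[OF aK, of "t i @ d"] c0 c1[of False] c1[of True] by simp
  next
    case False
    hence e: "N - length u = Suc (N - Suc (length u))" by simp
    show ?thesis unfolding c_def e by simp
  qed
  have cK: "c \<in> Kom \<Gamma> \<omega>" unfolding Kom_def
  proof (intro CollectI conjI allI)
    fix u show "c u \<in> carrier \<Gamma>" unfolding c_def by (rule fillC)
  next
    fix u show "c u = \<omega> (c (u @ [False]), c (u @ [True]))" by (rule crec)
  qed
  have cond: "c (s (\<sigma> i) @ u) = a (t i @ u)" if "i < n" for i u
  proof -
    have "\<forall>u. N - length (s (\<sigma> i) @ u) \<le> k \<longrightarrow> c (s (\<sigma> i) @ u) = a (t i @ u)" for k
    proof (induction k)
      case 0 thus ?case using base_eq[OF that] unfolding c_def by simp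
    next
      case (Suc k)
      show ?case
      proof (intro allI impI)
        fix u :: word01 assume h: "N - length (s (\<sigma> i) @ u) \<le> Suc k"
        show "c (s (\<sigma> i) @ u) = a (t i @ u)"
        proof (cases "N - length (s (\<sigma> i) @ u) \<le> k")
          case True thus ?thesis using Suc by simp
        next
          case False
          hence "N - length (s (\<sigma> i) @ (u @ [b])) \<le> k" for b using h by simp
          hence "c (s (\<sigma> i) @ u @ [b]) = a (t i @ u @ [b])" for b using Suc by blast
          thus ?thesis using crec[of "s (\<sigma> i) @ u"] Kom_rec[OF aK, of "t i @ u"] by simp
        qed
      qed
    qed
    thus ?thesis by (metis diff_le_self)
  qed
  have "Pp \<Gamma> \<omega> v a c" unfolding Pp_def using cK r cond by blast
  thus ?thesis by blast
qed

lemma pi_act_eq: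
  assumes "Pp \<Gamma> \<omega> v a c"
  shows "pi_act \<Gamma> \<omega> v a = c"
  unfolding pi_act_Pp
proof (rule the_equality)
  show "Pp \<Gamma> \<omega> v a c" by (rule assms)
next
  fix c' assume "Pp \<Gamma> \<omega> v a c'"
  thus "c' = c" using assms Pp_unique by blast
qed

lemma pi_act_Pp_holds:
  assumes cl: "\<And>x y. x \<in> carrier \<Gamma> \<Longrightarrow> y \<in> carrier \<Gamma> \<Longrightarrow> \<omega> (x, y) \<in> carrier \<Gamma>"
    and v: "v \<in> thompsonV" and aK: "a \<in> Kom \<Gamma> \<omega>"
  shows "Pp \<Gamma> \<omega> v a (pi_act \<Gamma> \<omega> v a)"
proof -
  obtain n t s \<sigma> where r: "V_rep v n t s \<sigma>" using v unfolding thompsonV_def by blast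
  obtain c where "Pp \<Gamma> \<omega> v a c" using Pp_exists[OF cl r aK] by blast
  thus ?thesis using pi_act_eq by metis
qed

lemma code_flip: "complete_prefix_code n t \<Longrightarrow> complete_prefix_code n (flipw \<circ> t)"
  unfolding complete_prefix_code_def
proof (intro conjI allI)
  assume h: "inj_on t {..<n} \<and> (\<forall>x. \<exists>!i. i < n \<and> is_prefix_of (t i) x)"
  show "inj_on (flipw \<circ> t) {..<n}" using h inj_flipw by (simp add: comp_inj_on inj_on_subset)
  fix x
  show "\<exists>!i. i < n \<and> is_prefix_of ((flipw \<circ> t) i) x"
    using h by (simp add: prefix_flip)
qed

lemma V_rep_flip:
  assumes "V_rep v n t s \<sigma>"
  shows "V_rep (flipc \<circ> v \<circ> flipc) n (flipw \<circ> t) (flipw \<circ> s) \<sigma>"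
proof -
  have act: "\<And>i w. i < n \<Longrightarrow> v (prepend (t i) w) = prepend (s (\<sigma> i)) w"
    using assms unfolding V_rep_def by auto
  have "(flipc \<circ> v \<circ> flipc) (prepend (flipw (t i)) w) = prepend (flipw (s (\<sigma> i))) w"
    if "i < n" for i w
  proof -
    have "(flipc \<circ> v \<circ> flipc) (prepend (flipw (t i)) w) = flipc (v (prepend (t i) (flipc w)))"
      by (simp add: flipc_prepend)
    also have "\<dots> = flipc (prepend (s (\<sigma> i)) (flipc w))" using act[OF that] by simp
    also have "\<dots> = prepend (flipw (s (\<sigma> i))) w" by (simp add: prepend_flip)
    finally show ?thesis .
  qed
  thus ?thesis using assms code_flip unfolding V_rep_def by simp
qed

lemma V_flip: "v \<in> thompsonV \<Longrightarrow> flipc \<circ> v \<circ> flipc \<in> thompsonV"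
  unfolding thompsonV_def using V_rep_flip by blast

lemma Kom_flip:
  assumes "a \<in> Kom \<Gamma> (\<lambda>(g, h). \<omega> (h, g))"
  shows "a \<circ> flipw \<in> Kom \<Gamma> \<omega>"
  unfolding Kom_def
proof (intro CollectI conjI allI)
  fix u
  have "a (flipw u) \<in> carrier \<Gamma>" using assms unfolding Kom_def by blast
  thus "(a \<circ> flipw) u \<in> carrier \<Gamma>" by simp
  have "a (flipw u) = \<omega> (a (flipw u @ [True]), a (flipw u @ [False]))"
    using Kom_rec[OF assms, of "flipw u"] by simp
  thus "(a \<circ> flipw) u = \<omega> ((a \<circ> flipw) (u @ [False]), (a \<circ> flipw) (u @ [True]))" by simp
qed

lemma Pp_flip:
  assumes "Pp \<Gamma> (\<lambda>(g, h). \<omega> (h, g)) v b c"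
  shows "Pp \<Gamma> \<omega> (flipc \<circ> v \<circ> flipc) (b \<circ> flipw) (c \<circ> flipw)"
proof -
  obtain n t s \<sigma> where r: "V_rep v n t s \<sigma>" and cK: "c \<in> Kom \<Gamma> (\<lambda>(g, h). \<omega> (h, g))"
    and h: "\<forall>i<n. \<forall>u. c (s (\<sigma> i) @ u) = b (t i @ u)"
    using assms unfolding Pp_def by blast
  have "\<forall>i<n. \<forall>u. (c \<circ> flipw) ((flipw \<circ> s) (\<sigma> i) @ u) = (b \<circ> flipw) ((flipw \<circ> t) i @ u)"
    using h by simp
  thus ?thesis unfolding Pp_def using Kom_flip[OF cK] V_rep_flip[OF r] by blast
qed

definition Phi :: "(word01 \<Rightarrow> 'g) \<times> (cantor \<Rightarrow> cantor) \<Rightarrow> (word01 \<Rightarrow> 'g) \<times> (cantor \<Rightarrow> cantor)" where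
  "Phi x = (fst x \<circ> flipw, flipc \<circ> snd x \<circ> flipc)"

lemma Phi_Phi[simp]: "Phi (Phi x) = x"
  unfolding Phi_def by (cases x) (auto simp: fun_eq_iff)

lemma Phi_carrier:
  "x \<in> carrier (Gom \<Gamma> (\<lambda>(g, h). \<omega> (h, g))) \<Longrightarrow> Phi x \<in> carrier (Gom \<Gamma> \<omega>)"
  unfolding Gom_def Phi_def by (auto intro: Kom_flip V_flip)

lemma swap_swap: "(\<lambda>(g, h). (\<lambda>(g, h). \<omega> (h, g)) (h, g)) = \<omega>"
  by (auto simp: fun_eq_iff)

theorem mainTheorem17:
  fixes \<Gamma> :: "('g, 'm) monoid_scheme" and \<omega> :: "'g \<times> 'g \<Rightarrow> 'g"
  assumes "group \<Gamma>"
    and "\<omega> \<in> hom (\<Gamma> \<times>\<times> \<Gamma>) \<Gamma>"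
  shows "Gom \<Gamma> (\<lambda>(g, h). \<omega> (h, g)) \<cong> Gom \<Gamma> \<omega>"
proof (rule is_isoI)
  let ?w = "\<lambda>(g, h). \<omega> (h, g)"
  have cl: "\<omega> (x, y) \<in> carrier \<Gamma>" if "x \<in> carrier \<Gamma>" "y \<in> carrier \<Gamma>" for x y
    using assms(2) that unfolding hom_def by auto
  have clw: "?w (x, y) \<in> carrier \<Gamma>" if "x \<in> carrier \<Gamma>" "y \<in> carrier \<Gamma>" for x y
    using cl that by simp
  have bk: "y \<in> carrier (Gom \<Gamma> \<omega>) \<Longrightarrow> Phi y \<in> carrier (Gom \<Gamma> ?w)" for y
    using Phi_carrier[of y \<Gamma> ?w] by (simp only: swap_swap)
  have bij: "bij_betw Phi (carrier (Gom \<Gamma> ?w)) (carrier (Gom \<Gamma> \<omega>))"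
    by (rule bij_betw_byWitness[where f' = Phi]) (auto intro: Phi_carrier bk)
  have mult: "Phi (x \<otimes>\<^bsub>Gom \<Gamma> ?w\<^esub> y) = Phi x \<otimes>\<^bsub>Gom \<Gamma> \<omega>\<^esub> Phi y"
    if x: "x \<in> carrier (Gom \<Gamma> ?w)" and y: "y \<in> carrier (Gom \<Gamma> ?w)" for x y
  proof -
    obtain a v where xa: "x = (a, v)" by (cases x)
    obtain b w where yb: "y = (b, w)" by (cases y)
    have v: "v \<in> thompsonV" and bK: "b \<in> Kom \<Gamma> ?w"
      using x y xa yb unfolding Gom_def by auto
    have P: "Pp \<Gamma> ?w v b (pi_act \<Gamma> ?w v b)"
      by (rule pi_act_Pp_holds[OF clw v bK])
    have key: "pi_act \<Gamma> \<omega> (flipc \<circ> v \<circ> flipc) (b \<circ> flipw) = pi_act \<Gamma> ?w v b \<circ> flipw"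
      by (rule pi_act_eq[OF Pp_flip[OF P]])
    have vw: "flipc \<circ> (v \<circ> w) \<circ> flipc = (flipc \<circ> v \<circ> flipc) \<circ> (flipc \<circ> w \<circ> flipc)"
      by (auto simp: fun_eq_iff)
    show ?thesis unfolding xa yb Phi_def Gom_def
      by (simp add: key vw fun_eq_iff)
  qed
  show "Phi \<in> iso (Gom \<Gamma> ?w) (Gom \<Gamma> \<omega>)"
    unfolding iso_def hom_def using bij mult Phi_carrier bij_betw_apply by fastforce
qed

end
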